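(* Let $d>0$ be square-free and $n\in\mathbb{Z}$. Then every immersed totally geodesic surface in $\mathbb{H}^3/\Gamma_d(n)$ of discriminant $D\le n/4$ is embedded.
   Context: $\mathcal{O}_d$ is the ring of integers of $\mathbb{Q}(\sqrt{-d})$, $\Gamma_d=\mathrm{PSL}(2,\mathcal{O}_d)$, and $\Gamma_d(n)=\ker(\Gamma_d\to\mathrm{PSL}(2,\mathcal{O}_d/n\mathcal{O}_d))$. Immersed totally geodesic surfaces in $\mathbb{H}^3/\Gamma$ ($\Gamma<\Gamma_d$ of finite index) correspond to $\Gamma$-orbits of circles/lines $\mathcal{C}:a|z|^2+Bz+\bar B\bar z+c=0$ with $a,c\in\mathbb{Z}$, $B\in\mathcal{O}_d$; the discriminant of the surface is $D=|B|^2-ac>0$. The surface is the image of the hyperbolic plane $H_{\mathcal{C}}$ bounded by $\mathcal{C}$, and it is embedded if for all $\gamma\in\Gamma$, $\gamma H_{\mathcal{C}}=H_{\mathcal{C}}$ or $\gamma H_{\mathcal{C}}\cap H_{\mathcal{C}}=\emptyset$. *)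

theory Defs
  imports Complex_Main "HOL-Computational_Algebra.Squarefree"
begin

text \<open>The ring of integers O_d of Q(sqrt(-d)), d > 0 squarefree, as a subset of the complex
numbers: Z[omega] with omega = sqrt(-d) if d = 1,2 mod 4 and omega = (1 + sqrt(-d))/2 if d = 3 mod 4.\<close>

definition omega_d :: "nat \<Rightarrow> complex" where
  "omega_d d = (if d mod 4 = 3 then (1 + \<i> * of_real (sqrt (real d))) / 2
                else \<i> * of_real (sqrt (real d)))"

definition O_d :: "nat \<Rightarrow> complex set" where
  "O_d d = {of_int x + of_int y * omega_d d | x y. True}"

definition cong_Od :: "nat \<Rightarrow> int \<Rightarrow> complex \<Rightarrow> complex \<Rightarrow> bool" where
  "cong_Od d n x y \<longleftrightarrow> (\<exists>w \<in> O_d d. x - y = of_int n * w)"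

text \<open>2x2 complex matrices (alpha, beta, gamma, delta) = [[alpha, beta],[gamma, delta]].\<close>
type_synonym cmat = "complex \<times> complex \<times> complex \<times> complex"

text \<open>Representatives in SL(2,O_d) of the principal congruence subgroup Gamma_d(n) of
PSL(2,O_d): the kernel of reduction PSL(2,O_d) -> PSL(2,O_d/nO_d), i.e. matrices congruent
to +I or -I modulo n.\<close>
definition Gamma_d_n :: "nat \<Rightarrow> int \<Rightarrow> cmat set" where
  "Gamma_d_n d n = {(al, be, ga, de). al \<in> O_d d \<and> be \<in> O_d d \<and> ga \<in> O_d d \<and> de \<in> O_d d
       \<and> al * de - be * ga = 1
       \<and> ((cong_Od d n al 1 \<and> cong_Od d n be 0 \<and> cong_Od d n ga 0 \<and> cong_Od d n de 1)
          \<or> (cong_Od d n al (-1) \<and> cong_Od d n be 0 \<and> cong_Od d n ga 0 \<and> cong_Od d n de (-1)))}"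

definition H3 :: "(complex \<times> real) set" where
  "H3 = {(z, t). t > 0}"

text \<open>Poincare extension of the Moebius transformation of a matrix to H^3.\<close>
definition mob_ext :: "cmat \<Rightarrow> complex \<times> real \<Rightarrow> complex \<times> real" where
  "mob_ext g p = (case g of (al, be, ga, de) \<Rightarrow> (case p of (z, t) \<Rightarrow>
     (let N = (cmod (ga * z + de))\<^sup>2 + (cmod ga)\<^sup>2 * t\<^sup>2 in
      (((al * z + be) * cnj (ga * z + de) + al * cnj ga * of_real (t\<^sup>2)) / of_real N, t / N))))"

definition Hplane :: "int \<Rightarrow> complex \<Rightarrow> int \<Rightarrow> (complex \<times> real) set" where
  "Hplane a B c = {(z, t). t > 0 \<and>
      of_int a * of_real ((cmod z)\<^sup>2 + t\<^sup>2) + B * z + cnj B * cnj z + of_int c = 0}"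

definition disc :: "int \<Rightarrow> complex \<Rightarrow> int \<Rightarrow> real" where
  "disc a B c = (cmod B)\<^sup>2 - real_of_int (a * c)"

definition embedded_in :: "cmat set \<Rightarrow> (complex \<times> real) set \<Rightarrow> bool" where
  "embedded_in G H \<longleftrightarrow> (\<forall>g \<in> G. mob_ext g ` H = H \<or> mob_ext g ` H \<inter> H = {})"

end

theory Submission
  imports Defs
begin


lemma poly_norm:
  fixes a b c d a' b' c' d' z z' T :: complex
  assumes "a*d - b*c = 1" "a'*d' - b'*c' = 1"
  shows "((a*z+b)*(c'*z'+d') + a*c'*T) * ((a'*z'+b')*(c*z+d) + a'*c*T) + T
       = ((c*z+d)*(c'*z'+d') + c*c'*T) * ((a*z+b)*(a'*z'+b') + a*a'*T)"
  using assms by algebra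

lemma poly_inv1:
  fixes a b c d a' b' c' d' z z' T :: complex
  assumes "a*d - b*c = 1" "a'*d' - b'*c' = 1"
  shows "c * ((d*z - b)*(-c'*z'+a') + d*(-c')*T) + d * ((-c*z+a)*(-c'*z'+a') + c*c'*T) = a' - c'*z'"
  using assms by algebra

lemma poly_inv2:
  fixes a b c d a' b' c' d' z z' T :: complex
  assumes "a*d - b*c = 1" "a'*d' - b'*c' = 1"
  shows "(a * ((d*z - b)*(-c'*z'+a') + d*(-c')*T) + b * ((-c*z+a)*(-c'*z'+a') + c*c'*T)) * (a - c*z) + a*c'*T
     = z * ((-c*z+a)*(-c'*z'+a') + c*c'*T)"
  using assms by algebra



definition ev :: "real \<Rightarrow> complex \<Rightarrow> real \<Rightarrow> complex \<Rightarrow> real \<Rightarrow> complex" where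
  "ev A B C z t = of_real A * (z * cnj z + of_real (t\<^sup>2)) + B * z + cnj B * cnj z + of_real C"

definition HP :: "real \<Rightarrow> complex \<Rightarrow> real \<Rightarrow> (complex \<times> real) set" where
  "HP A B C = {(z, t). t > 0 \<and> ev A B C z t = 0}"

definition actA :: "complex \<Rightarrow> complex \<Rightarrow> complex \<Rightarrow> complex \<Rightarrow> real \<Rightarrow> complex \<Rightarrow> real \<Rightarrow> real" where
  "actA al be ga de A B C = A * (cmod al)\<^sup>2 + 2 * Re (B * al * cnj ga) + C * (cmod ga)\<^sup>2"
definition actB :: "complex \<Rightarrow> complex \<Rightarrow> complex \<Rightarrow> complex \<Rightarrow> real \<Rightarrow> complex \<Rightarrow> real \<Rightarrow> complex" where
  "actB al be ga de A B C = of_real A * al * cnj be + B * al * cnj de + cnj B * cnj be * ga + of_real C * ga * cnj de"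
definition actC :: "complex \<Rightarrow> complex \<Rightarrow> complex \<Rightarrow> complex \<Rightarrow> real \<Rightarrow> complex \<Rightarrow> real \<Rightarrow> real" where
  "actC al be ga de A B C = A * (cmod be)\<^sup>2 + 2 * Re (B * be * cnj de) + C * (cmod de)\<^sup>2"

lemma of_real_2Re: "complex_of_real (2 * Re w) = w + cnj w"
  by (simp add: complex_add_cnj)

lemma actA_c: "complex_of_real (actA al be ga de A B C) =
   of_real A * al * cnj al + B * al * cnj ga + cnj B * cnj al * ga + of_real C * ga * cnj ga"
proof -
  have e: "complex_of_real ((cmod w)\<^sup>2) = w * cnj w" for w by (rule complex_norm_square)
  show ?thesis unfolding actA_def of_real_add of_real_2Re unfolding of_real_mult e
    by (simp add: algebra_simps)
qed

lemma actC_c: "complex_of_real (actC al be ga de A B C) =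
   of_real A * be * cnj be + B * be * cnj de + cnj B * cnj be * de + of_real C * de * cnj de"
proof -
  have e: "complex_of_real ((cmod w)\<^sup>2) = w * cnj w" for w by (rule complex_norm_square)
  show ?thesis unfolding actC_def of_real_add of_real_2Re unfolding of_real_mult e
    by (simp add: algebra_simps)
qed

lemma mob_pos:
  assumes det: "al*de - be*ga = 1" and t: "t > 0"
  shows "(cmod (ga*z+de))\<^sup>2 + (cmod ga)\<^sup>2 * t\<^sup>2 > 0"
proof (cases "ga = 0")
  case True
  then have "de \<noteq> 0" using det by auto
  then show ?thesis using True by simp
next
  case False
  then have "(cmod ga)\<^sup>2 * t\<^sup>2 > 0" using t by simp
  then show ?thesis by (smt (verit) zero_le_power2)
qed

lemma pullback:
  assumes det: "al*de - be*ga = 1" and t: "t > 0"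
  shows "snd (mob_ext (al,be,ga,de) (z,t)) > 0"
    and "ev A B C (fst (mob_ext (al,be,ga,de) (z,t))) (snd (mob_ext (al,be,ga,de) (z,t)))
          * of_real ((cmod (ga*z+de))\<^sup>2 + (cmod ga)\<^sup>2 * t\<^sup>2)
         = ev (actA al be ga de A B C) (actB al be ga de A B C) (actC al be ga de A B C) z t"
proof -
  define N where "N = (cmod (ga*z+de))\<^sup>2 + (cmod ga)\<^sup>2 * t\<^sup>2"
  have Npos: "N > 0" unfolding N_def by (rule mob_pos[OF det t])
  define T where "T = complex_of_real (t\<^sup>2)"
  define Z where "Z = (al * z + be) * cnj (ga * z + de) + al * cnj ga * T"
  define Nc where "Nc = (ga*z+de)*(cnj ga * cnj z + cnj de) + ga * cnj ga * T"
  define P where "P = (al*z+be)*(cnj al * cnj z + cnj be) + al * cnj al * T"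
  have NNc: "complex_of_real N = Nc"
  proof -
    have e: "complex_of_real ((cmod w)\<^sup>2) = w * cnj w" for w by (rule complex_norm_square)
    show ?thesis unfolding N_def Nc_def T_def of_real_add of_real_mult e by simp
  qed
  have Nc0: "Nc \<noteq> 0" using Npos NNc by (metis of_real_eq_0_iff less_irrefl)
  have me: "mob_ext (al,be,ga,de) (z,t) = (Z / of_real N, t / N)"
    unfolding mob_ext_def Z_def N_def T_def by (simp add: Let_def)
  show "snd (mob_ext (al,be,ga,de) (z,t)) > 0" using me Npos t by simp
  have detc: "cnj al * cnj de - cnj be * cnj ga = 1" using arg_cong[OF det, of cnj] by simp
  have key: "Z * cnj Z + T = Nc * P"
  proof -
    have cZ: "cnj Z = (cnj al * cnj z + cnj be) * (ga * z + de) + cnj al * ga * T"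
      unfolding Z_def T_def by simp
    show ?thesis unfolding cZ unfolding Z_def Nc_def P_def
      using poly_norm[OF det detc, of z "cnj z" T] by (simp add: algebra_simps)
  qed
  have "ev A B C (Z / of_real N) (t / N) * of_real N
      = of_real A * ((Z * cnj Z + T) / Nc) + B * Z + cnj B * cnj Z + of_real C * Nc"
    unfolding ev_def NNc T_def using Nc0 NNc[symmetric]
    by (simp add: field_simps power2_eq_square)
  also have "\<dots> = of_real A * P + B * Z + cnj B * cnj Z + of_real C * Nc"
    using key Nc0 by simp
  also have "\<dots> = ev (actA al be ga de A B C) (actB al be ga de A B C) (actC al be ga de A B C) z t"
    unfolding ev_def actA_c actC_c actB_def Z_def P_def Nc_def T_def
    by (simp add: algebra_simps)
  finally show "ev A B C (fst (mob_ext (al,be,ga,de) (z,t))) (snd (mob_ext (al,be,ga,de) (z,t)))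
          * of_real ((cmod (ga*z+de))\<^sup>2 + (cmod ga)\<^sup>2 * t\<^sup>2)
         = ev (actA al be ga de A B C) (actB al be ga de A B C) (actC al be ga de A B C) z t"
    using me N_def by simp
qed



lemma mob_inv:
  assumes det: "al*de - be*ga = 1" and t: "t > 0"
  shows "mob_ext (al,be,ga,de) (mob_ext (de,-be,-ga,al) (z,t)) = (z,t)"
proof -
  have det': "de*al - (-be)*(-ga) = 1" using det by (simp add: algebra_simps)
  define N1 where "N1 = (cmod ((-ga)*z+al))\<^sup>2 + (cmod (-ga))\<^sup>2 * t\<^sup>2"
  have N1pos: "N1 > 0" unfolding N1_def by (rule mob_pos[OF det' t])
  define T where "T = complex_of_real (t\<^sup>2)"
  define Z1 where "Z1 = (de * z + (-be)) * cnj ((-ga) * z + al) + de * cnj (-ga) * T"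
  define N1c where "N1c = (-ga*z+al)*(- cnj ga * cnj z + cnj al) + ga * cnj ga * T"
  have e: "complex_of_real ((cmod w)\<^sup>2) = w * cnj w" for w by (rule complex_norm_square)
  have NNc: "complex_of_real N1 = N1c"
    unfolding N1_def N1c_def T_def of_real_add of_real_mult e by simp
  have cN: "cnj N1c = N1c" using NNc by (metis complex_cnj_complex_of_real)
  have Nc0: "N1c \<noteq> 0" using N1pos NNc by (metis of_real_eq_0_iff less_irrefl)
  have me: "mob_ext (de,-be,-ga,al) (z,t) = (Z1 / of_real N1, t / N1)"
    unfolding mob_ext_def Z1_def N1_def T_def by (simp add: Let_def)
  have detc: "cnj al * cnj de - cnj be * cnj ga = 1" using arg_cong[OF det, of cnj] by simp
  define W where "W = ga*Z1 + de*N1c"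
  have W: "W = cnj (al - ga*z)"
    unfolding W_def Z1_def N1c_def using poly_inv1[OF det detc, of z "cnj z" T] by (simp add: algebra_simps)
  have num: "(al*Z1 + be*N1c) * cnj W + al * cnj ga * T = z * N1c"
    unfolding W Z1_def N1c_def using poly_inv2[OF det detc, of z "cnj z" T] by (simp add: algebra_simps)
  have gw: "ga * (Z1 / of_real N1) + de = W / of_real N1"
    unfolding W_def NNc using Nc0 by (simp add: field_simps)
  have cW: "cmod W = cmod ((-ga)*z+al)" unfolding W complex_mod_cnj by (simp add: algebra_simps)
  define N2 where "N2 = (cmod (ga * (Z1 / of_real N1) + de))\<^sup>2 + (cmod ga)\<^sup>2 * (t/N1)\<^sup>2"
  have N2: "N2 = 1 / N1"
  proof -
    have "N2 = ((cmod W)\<^sup>2 + (cmod ga)\<^sup>2 * t\<^sup>2) / N1\<^sup>2"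
      unfolding N2_def gw using N1pos by (simp add: norm_divide field_simps)
    also have "\<dots> = N1 / N1\<^sup>2" unfolding cW N1_def by simp
    also have "\<dots> = 1 / N1" using N1pos by (simp add: power2_eq_square)
    finally show ?thesis .
  qed
  have c1: "((al * (Z1 / of_real N1) + be) * cnj (ga * (Z1 / of_real N1) + de)
             + al * cnj ga * of_real ((t/N1)\<^sup>2)) / of_real N2 = z"
  proof -
    have "((al * (Z1 / of_real N1) + be) * cnj (ga * (Z1 / of_real N1) + de)
             + al * cnj ga * of_real ((t/N1)\<^sup>2))
          = ((al*Z1 + be*N1c) * cnj W + al * cnj ga * T) / N1c^2"
      unfolding gw T_def using Nc0 NNc cN by (simp add: field_simps power2_eq_square)
    also have "\<dots> = z / N1c" unfolding num using Nc0 by (simp add: power2_eq_square)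
    finally show ?thesis unfolding N2 using Nc0 NNc by (simp add: field_simps)
  qed
  show ?thesis unfolding me
    unfolding mob_ext_def Let_def
    using c1 N2 N1pos unfolding N2_def by (simp add: field_simps)
qed



lemma omega_W1: "\<exists>t0::int. cnj (omega_d d) = of_int t0 - omega_d d"
proof (cases "d mod 4 = 3")
  case True
  then show ?thesis unfolding omega_d_def
    by (intro exI[of _ 1]) (simp add: complex_eq_iff)
next
  case False
  then show ?thesis unfolding omega_d_def
    by (intro exI[of _ 0]) (simp add: complex_eq_iff)
qed

lemma omega_W2: "\<exists>m0::int. omega_d d * cnj (omega_d d) = of_int m0"
proof (cases "d mod 4 = 3")
  case True
  have s: "sqrt (real d) * sqrt (real d) = real d" by simp
  obtain k where k: "d + 1 = 4 * k" using True by (metis mod_add_left_eq mod_self dvd_def mod_0_imp_dvd numeral_plus_one Suc_eq_plus1 semiring_norm(2) semiring_norm(8))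
  have "omega_d d * cnj (omega_d d) = of_int (int k)"
    unfolding omega_d_def using True
    apply (simp add: complex_eq_iff)
    using s k by (simp add: field_simps power2_eq_square)
  then show ?thesis by blast
next
  case False
  have "omega_d d * cnj (omega_d d) = of_int (int d)"
    unfolding omega_d_def using False by (simp add: complex_eq_iff power2_eq_square)
  then show ?thesis by blast
qed



lemma Od_iff: "x \<in> O_d d \<longleftrightarrow> (\<exists>p q::int. x = of_int p + of_int q * omega_d d)"
  unfolding O_d_def by blast

lemma Od_int: "of_int k \<in> O_d d"
  unfolding Od_iff by (intro exI[of _ k] exI[of _ 0]) simp

lemma Od_add: "x \<in> O_d d \<Longrightarrow> y \<in> O_d d \<Longrightarrow> x + y \<in> O_d d"
  unfolding Od_iff
  by (elim exE, rename_tac p1 q1 p2 q2, rule_tac x="p1+p2" in exI, rule_tac x="q1+q2" in exI) (simp add: algebra_simps)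

lemma Od_diff: "x \<in> O_d d \<Longrightarrow> y \<in> O_d d \<Longrightarrow> x - y \<in> O_d d"
  unfolding Od_iff
  by (elim exE, rename_tac p1 q1 p2 q2, rule_tac x="p1-p2" in exI, rule_tac x="q1-q2" in exI) (simp add: algebra_simps)

lemma Od_mult: assumes "x \<in> O_d d" "y \<in> O_d d" shows "x * y \<in> O_d d"
proof -
  obtain t0 :: int where t0: "cnj (omega_d d) = of_int t0 - omega_d d" using omega_W1 by blast
  obtain m0 :: int where m0: "omega_d d * cnj (omega_d d) = of_int m0" using omega_W2 by blast
  have w2: "omega_d d * omega_d d = of_int t0 * omega_d d - of_int m0"
    using m0 unfolding t0 by (simp add: algebra_simps)
  obtain p1 q1 p2 q2 :: int where x: "x = of_int p1 + of_int q1 * omega_d d"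
    and y: "y = of_int p2 + of_int q2 * omega_d d" using assms unfolding Od_iff by blast
  have "x * y = of_int (p1*p2 - q1*q2*m0) + of_int (p1*q2 + p2*q1 + q1*q2*t0) * omega_d d"
    using w2 unfolding x y of_int_add of_int_mult of_int_diff by algebra
  then show ?thesis unfolding Od_iff by blast
qed

lemma Od_cnj: assumes "x \<in> O_d d" shows "cnj x \<in> O_d d"
proof -
  obtain t0 :: int where t0: "cnj (omega_d d) = of_int t0 - omega_d d" using omega_W1 by blast
  obtain p1 q1 :: int where x: "x = of_int p1 + of_int q1 * omega_d d"
    using assms unfolding Od_iff by blast
  have "cnj x = of_int (p1 + q1*t0) + of_int (- q1) * omega_d d"
    unfolding x by (simp add: t0 algebra_simps)
  then show ?thesis unfolding Od_iff by blast
qed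

lemma Od_tr: assumes "x \<in> O_d d" shows "\<exists>k::int. x + cnj x = of_int k"
proof -
  obtain t0 :: int where t0: "cnj (omega_d d) = of_int t0 - omega_d d" using omega_W1 by blast
  obtain p1 q1 :: int where x: "x = of_int p1 + of_int q1 * omega_d d"
    using assms unfolding Od_iff by blast
  have "x + cnj x = of_int (2*p1 + q1*t0)"
    unfolding x by (simp add: t0 algebra_simps)
  then show ?thesis by blast
qed

lemma Od_nrm: assumes "x \<in> O_d d" shows "\<exists>k::int. x * cnj x = of_int k"
proof -
  obtain t0 :: int where t0: "cnj (omega_d d) = of_int t0 - omega_d d" using omega_W1 by blast
  obtain m0 :: int where m0: "omega_d d * cnj (omega_d d) = of_int m0" using omega_W2 by blast
  have w2: "omega_d d * omega_d d = of_int t0 * omega_d d - of_int m0"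
    using m0 unfolding t0 by (simp add: algebra_simps)
  obtain p1 q1 :: int where x: "x = of_int p1 + of_int q1 * omega_d d"
    using assms unfolding Od_iff by blast
  have "x * cnj x = of_int (p1*p1 + p1*q1*t0 + q1*q1*m0)"
    using w2 m0 t0 unfolding x complex_cnj_add complex_cnj_mult complex_cnj_of_int of_int_add of_int_mult
    by algebra
  then show ?thesis by blast
qed



lemma cong_core:
  fixes n e a c :: int
  assumes e: "e*e = 1"
    and x1: "x1 \<in> O_d d" and x2: "x2 \<in> O_d d" and x3: "x3 \<in> O_d d" and x4: "x4 \<in> O_d d"
    and B: "B \<in> O_d d"
    and al: "al = of_int e + of_int n * x1" and be: "be = of_int n * x2"
    and ga: "ga = of_int n * x3" and de: "de = of_int e + of_int n * x4"
  shows "\<exists>k::int. (actB al be ga de (of_int a) B (of_int c) - B) * cnj (actB al be ga de (of_int a) B (of_int c) - B)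
     - (of_real (actA al be ga de (of_int a) B (of_int c)) - of_int a)
       * (of_real (actC al be ga de (of_int a) B (of_int c)) - of_int c) = of_int (n^2) * of_int k"
proof -
  have ee: "(of_int e :: complex) * of_int e = 1" using e by (metis of_int_1 of_int_mult)
  obtain kt1 where kt1: "x1 + cnj x1 = of_int kt1" using Od_tr[OF x1] by blast
  obtain km1 where km1: "x1 * cnj x1 = of_int km1" using Od_nrm[OF x1] by blast
  obtain kt4 where kt4: "x4 + cnj x4 = of_int kt4" using Od_tr[OF x4] by blast
  obtain km4 where km4: "x4 * cnj x4 = of_int km4" using Od_nrm[OF x4] by blast
  obtain km2 where km2: "x2 * cnj x2 = of_int km2" using Od_nrm[OF x2] by blast
  obtain km3 where km3: "x3 * cnj x3 = of_int km3" using Od_nrm[OF x3] by blast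
  have "B * cnj x3 \<in> O_d d" by (intro Od_mult Od_cnj B x3)
  then obtain ku where ku: "B * cnj x3 + cnj (B * cnj x3) = of_int ku" using Od_tr by blast
  have "B * x1 * cnj x3 \<in> O_d d" by (intro Od_mult Od_cnj B x3 x1)
  then obtain kv where kv: "B * x1 * cnj x3 + cnj (B * x1 * cnj x3) = of_int kv" using Od_tr by blast
  have "B * x2 \<in> O_d d" by (intro Od_mult Od_cnj B x2)
  then obtain ku' where ku': "B * x2 + cnj (B * x2) = of_int ku'" using Od_tr by blast
  have "B * x2 * cnj x4 \<in> O_d d" by (intro Od_mult Od_cnj B x2 x4)
  then obtain kv' where kv': "B * x2 * cnj x4 + cnj (B * x2 * cnj x4) = of_int kv'" using Od_tr by blast
  define KA where "KA = a*(e*kt1 + n*km1) + e*ku + n*kv + n*c*km3"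
  define KC where "KC = a*n*km2 + e*ku' + n*kv' + c*(e*kt4 + n*km4)"
  define eB where "eB = of_int a * (of_int e + of_int n * x1) * cnj x2
     + B * (of_int e * (x1 + cnj x4) + of_int n * x1 * cnj x4)
     + of_int n * cnj B * cnj x2 * x3 + of_int c * x3 * (of_int e + of_int n * cnj x4)"
  have eBO: "eB \<in> O_d d" unfolding eB_def
    by (intro Od_add Od_mult Od_cnj Od_int B x1 x2 x3 x4)
  then obtain kB where kB: "eB * cnj eB = of_int kB" using Od_nrm by blast
  have cal: "cnj al = of_int e + of_int n * cnj x1" unfolding al by simp
  have cbe: "cnj be = of_int n * cnj x2" unfolding be by simp
  have cga: "cnj ga = of_int n * cnj x3" unfolding ga by simp
  have cde: "cnj de = of_int e + of_int n * cnj x4" unfolding de by simp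
  have hA: "complex_of_real (actA al be ga de (of_int a) B (of_int c)) - of_int a = of_int n * of_int KA"
    unfolding actA_c of_real_of_int_eq cal cga KA_def of_int_add of_int_mult
    unfolding al ga using ee kt1 km1 km3 ku[simplified] kv[simplified]
    by algebra
  have hC: "complex_of_real (actC al be ga de (of_int a) B (of_int c)) - of_int c = of_int n * of_int KC"
    unfolding actC_c of_real_of_int_eq cbe cde KC_def of_int_add of_int_mult
    unfolding be de using ee kt4 km4 km2 ku'[simplified] kv'[simplified]
    by algebra
  have hB: "actB al be ga de (of_int a) B (of_int c) - B = of_int n * eB"
    unfolding actB_def of_real_of_int_eq cbe cde eB_def
    unfolding al be ga de using ee
    by algebra
  have hBc: "cnj (actB al be ga de (of_int a) B (of_int c) - B) = of_int n * cnj eB"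
    unfolding hB by simp
  show ?thesis
    apply (rule exI[of _ "kB - KA*KC"])
    unfolding hA hC hBc unfolding hB using kB
    by (simp add: algebra_simps power2_eq_square)
qed



lemma Qinv:
  assumes det: "al*de - be*ga = 1"
  shows "actB al be ga de A B C * cnj (actB al be ga de A B C)
     - complex_of_real (actA al be ga de A B C) * complex_of_real (actC al be ga de A B C)
     = B * cnj B - of_real A * of_real C"
proof -
  have detc: "cnj al * cnj de - cnj be * cnj ga = 1" using arg_cong[OF det, of cnj] by simp
  have cB: "cnj (actB al be ga de A B C) = of_real A * cnj al * be + cnj B * cnj al * de + B * be * cnj ga + of_real C * cnj ga * de"
    unfolding actB_def by simp
  show ?thesis unfolding cB actA_c actC_c unfolding actB_def using det detc by algebra
qed

lemma zero_lemma:
  assumes t: "t > 0" and e: "ev A B C z t = 0" and q: "(cmod B)\<^sup>2 - A * C \<le> 0"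
  shows "A = 0 \<and> B = 0 \<and> C = 0"
proof -
  have "Re (ev A B C z t) = 0" using e by simp
  then have r: "A * ((Re z)\<^sup>2 + (Im z)\<^sup>2 + t\<^sup>2) + 2 * (Re B * Re z - Im B * Im z) + C = 0"
    unfolding ev_def by (simp add: power2_eq_square algebra_simps)
  have q': "(Re B)\<^sup>2 + (Im B)\<^sup>2 - A * C \<le> 0" using q by (simp add: cmod_def)
  have id: "(Re B + A * Re z)\<^sup>2 + (Im B - A * Im z)\<^sup>2 + (A*t)\<^sup>2 = (Re B)\<^sup>2 + (Im B)\<^sup>2 - A * C"
    using r by algebra
  have s1: "(A*t)\<^sup>2 = 0" using id q' by (smt (verit) zero_le_power2)
  then have A0: "A = 0" using t by simp
  have "(Re B)\<^sup>2 + (Im B)\<^sup>2 \<le> 0" using q' A0 by simp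
  then have "(Re B)\<^sup>2 + (Im B)\<^sup>2 = 0" by (smt (verit) zero_le_power2)
  then have "Re B = 0" "Im B = 0" by (simp_all add: sum_power2_eq_zero_iff)
  then have B0: "B = 0" by (simp add: complex_eq_iff)
  have "C = 0" using r A0 B0 by simp
  then show ?thesis using A0 B0 by simp
qed

lemma ev_diff: "ev (A1 - A2) (B1 - B2) (C1 - C2) z t = ev A1 B1 C1 z t - ev A2 B2 C2 z t"
  unfolding ev_def by (simp add: algebra_simps)
lemma ev_add: "ev (A1 + A2) (B1 + B2) (C1 + C2) z t = ev A1 B1 C1 z t + ev A2 B2 C2 z t"
  unfolding ev_def by (simp add: algebra_simps)
lemma ev_neg: "ev (- A) (- B) (- C) z t = - ev A B C z t"
  unfolding ev_def by (simp add: algebra_simps)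

lemma Gamma_decomp:
  assumes "(al,be,ga,de) \<in> Gamma_d_n d n"
  shows "al*de - be*ga = 1 \<and> (\<exists>e x1 x2 x3 x4. e*e = (1::int) \<and> x1 \<in> O_d d \<and> x2 \<in> O_d d \<and> x3 \<in> O_d d \<and> x4 \<in> O_d d
     \<and> al = of_int e + of_int n * x1 \<and> be = of_int n * x2 \<and> ga = of_int n * x3 \<and> de = of_int e + of_int n * x4)"
proof -
  have det: "al*de - be*ga = 1" using assms unfolding Gamma_d_n_def by simp
  have "(cong_Od d n al 1 \<and> cong_Od d n be 0 \<and> cong_Od d n ga 0 \<and> cong_Od d n de 1)
          \<or> (cong_Od d n al (-1) \<and> cong_Od d n be 0 \<and> cong_Od d n ga 0 \<and> cong_Od d n de (-1))"
    using assms unfolding Gamma_d_n_def by simp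
  then have "\<exists>e x1 x2 x3 x4. e*e = (1::int) \<and> x1 \<in> O_d d \<and> x2 \<in> O_d d \<and> x3 \<in> O_d d \<and> x4 \<in> O_d d
     \<and> al = of_int e + of_int n * x1 \<and> be = of_int n * x2 \<and> ga = of_int n * x3 \<and> de = of_int e + of_int n * x4"
  proof
    assume "cong_Od d n al 1 \<and> cong_Od d n be 0 \<and> cong_Od d n ga 0 \<and> cong_Od d n de 1"
    then obtain x1 x2 x3 x4 where "x1 \<in> O_d d" "al - 1 = of_int n * x1" "x2 \<in> O_d d" "be - 0 = of_int n * x2"
      "x3 \<in> O_d d" "ga - 0 = of_int n * x3" "x4 \<in> O_d d" "de - 1 = of_int n * x4"
      unfolding cong_Od_def by blast
    then show ?thesis by (intro exI[of _ 1] exI[of _ x1] exI[of _ x2] exI[of _ x3] exI[of _ x4])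
      (simp add: algebra_simps)
  next
    assume "cong_Od d n al (-1) \<and> cong_Od d n be 0 \<and> cong_Od d n ga 0 \<and> cong_Od d n de (-1)"
    then obtain x1 x2 x3 x4 where "x1 \<in> O_d d" "al - (-1) = of_int n * x1" "x2 \<in> O_d d" "be - 0 = of_int n * x2"
      "x3 \<in> O_d d" "ga - 0 = of_int n * x3" "x4 \<in> O_d d" "de - (-1) = of_int n * x4"
      unfolding cong_Od_def by blast
    then show ?thesis by (intro exI[of _ "-1"] exI[of _ x1] exI[of _ x2] exI[of _ x3] exI[of _ x4])
      (simp add: algebra_simps)
  qed
  then show ?thesis using det by blast
qed



lemma Hplane_HP: "Hplane a B c = HP (real_of_int a) B (real_of_int c)"
proof -
  have e: "complex_of_real ((cmod w)\<^sup>2) = w * cnj w" for w by (rule complex_norm_square)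
  have "of_int a * complex_of_real ((cmod z)\<^sup>2 + t\<^sup>2) + B * z + cnj B * cnj z + of_int c
        = ev (real_of_int a) B (real_of_int c) z t" for z t
    unfolding ev_def of_real_add e by simp
  then show ?thesis unfolding Hplane_def HP_def by simp
qed

lemma real_cplx: "complex_of_real x = complex_of_real y \<Longrightarrow> x = y" by simp

theorem theorem1p3:
  fixes d :: nat and n :: int and a c :: int and B :: complex
  assumes "d > 0" and "squarefree d"
    and "B \<in> O_d d"
    and "disc a B c > 0"
    and "disc a B c \<le> real_of_int n / 4"
  shows "embedded_in (Gamma_d_n d n) (Hplane a B c)"
proof -
  define A where "A = real_of_int a"
  define C where "C = real_of_int c"
  define D where "D = disc a B c"
  have Dd: "D = (cmod B)\<^sup>2 - A * C" unfolding D_def disc_def A_def C_def by simp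
  have Dpos: "D > 0" using assms(4) D_def by simp
  have n1: "n \<ge> 1" using assms(4,5) D_def by linarith
  have nD: "4 * D \<le> (real_of_int n)\<^sup>2"
  proof -
    have "real_of_int n \<le> (real_of_int n)\<^sup>2" using n1 by (simp add: power2_eq_square)
    then show ?thesis using assms(5) D_def by linarith
  qed
  have e: "complex_of_real ((cmod w)\<^sup>2) = w * cnj w" for w by (rule complex_norm_square)
  show ?thesis unfolding embedded_in_def Hplane_HP A_def[symmetric] C_def[symmetric]
  proof (intro ballI)
    fix g assume gG: "g \<in> Gamma_d_n d n"
    obtain al be ga de where g: "g = (al,be,ga,de)" by (cases g) auto
    obtain ee x1 x2 x3 x4 where det: "al*de - be*ga = 1" and ee: "ee*ee = (1::int)"
      and x: "x1 \<in> O_d d" "x2 \<in> O_d d" "x3 \<in> O_d d" "x4 \<in> O_d d"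
      and xs: "al = of_int ee + of_int n * x1" "be = of_int n * x2" "ga = of_int n * x3" "de = of_int ee + of_int n * x4"
      using Gamma_decomp[of al be ga de d n] gG g by blast
    define A' where "A' = actA al be ga de A B C"
    define B' where "B' = actB al be ga de A B C"
    define C' where "C' = actC al be ga de A B C"
    have pbpos: "snd (mob_ext g (z,t)) > 0" if "t > 0" for z t
      unfolding g using pullback(1)[OF det that] .
    have pb: "mob_ext g (z,t) \<in> HP A B C \<longleftrightarrow> ev A' B' C' z t = 0" if t: "t > 0" for z t
    proof -
      define N where "N = (cmod (ga*z+de))\<^sup>2 + (cmod ga)\<^sup>2 * t\<^sup>2"
      have Np: "N > 0" unfolding N_def by (rule mob_pos[OF det t])
      have eq: "ev A B C (fst (mob_ext g (z,t))) (snd (mob_ext g (z,t))) * of_real N = ev A' B' C' z t"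
        unfolding g N_def A'_def B'_def C'_def by (rule pullback(2)[OF det t])
      have "mob_ext g (z,t) \<in> HP A B C \<longleftrightarrow> ev A B C (fst (mob_ext g (z,t))) (snd (mob_ext g (z,t))) = 0"
        using pbpos[OF t, of z] unfolding HP_def by (cases "mob_ext g (z,t)") auto
      also have "\<dots> \<longleftrightarrow> ev A' B' C' z t = 0" using eq Np by (metis mult_eq_0_iff of_real_eq_0_iff less_irrefl)
      finally show ?thesis .
    qed
    obtain k :: int where kc: "(B' - B) * cnj (B' - B) - (complex_of_real A' - of_int a) * (complex_of_real C' - of_int c)
        = of_int (n^2) * of_int k"
      using cong_core[OF ee x(1-4) assms(3) xs, of a c] unfolding A'_def B'_def C'_def A_def C_def by blast
    have QE: "(cmod (B' - B))\<^sup>2 - (A' - A) * (C' - C) = (real_of_int n)\<^sup>2 * real_of_int k"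
      apply (rule real_cplx)
      using kc unfolding of_real_diff of_real_mult e A_def C_def by simp
    have QM: "(cmod B')\<^sup>2 - A' * C' = (cmod B)\<^sup>2 - A * C"
      apply (rule real_cplx)
      using Qinv[OF det, of A B C] unfolding of_real_diff of_real_mult e A'_def B'_def C'_def by simp
    have same: "ev A' B' C' z t = 0 \<longleftrightarrow> ev A B C z t = 0"
      if ex: "\<exists>p \<in> HP A B C. mob_ext g p \<in> HP A B C" for z t
    proof -
      obtain z0 t0 where p: "(z0,t0) \<in> HP A B C" and mp: "mob_ext g (z0,t0) \<in> HP A B C" using ex by auto
      have t0: "t0 > 0" and e0: "ev A B C z0 t0 = 0" using p unfolding HP_def by auto
      have e0': "ev A' B' C' z0 t0 = 0" using pb[OF t0] mp by simp
      have "(A' = A \<and> B' = B \<and> C' = C) \<or> (A' = - A \<and> B' = - B \<and> C' = - C)"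
      proof (cases "k \<le> 0")
        case True
        have "(cmod (B - B'))\<^sup>2 - (A - A') * (C - C') \<le> 0"
        proof -
          have "(cmod (B - B'))\<^sup>2 - (A - A') * (C - C') = (cmod (B' - B))\<^sup>2 - (A' - A) * (C' - C)"
            by (simp add: norm_minus_commute algebra_simps)
          also have "\<dots> \<le> 0" unfolding QE using True by (simp add: mult_nonneg_nonpos)
          finally show ?thesis .
        qed
        moreover have "ev (A - A') (B - B') (C - C') z0 t0 = 0" unfolding ev_diff e0 e0' by simp
        ultimately have "A - A' = 0 \<and> B - B' = 0 \<and> C - C' = 0" using zero_lemma[OF t0] by blast
        then show ?thesis by simp
      next
        case False
        have par: "(cmod (B + B'))\<^sup>2 + (cmod (B' - B))\<^sup>2 = 2 * (cmod B)\<^sup>2 + 2 * (cmod B')\<^sup>2"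
          unfolding cmod_power2 by (simp add: power2_eq_square algebra_simps)
        have "(cmod (B + B'))\<^sup>2 - (A + A') * (C + C') = 4 * D - (real_of_int n)\<^sup>2 * real_of_int k"
          using par QE QM Dd by (simp add: algebra_simps)
        also have "\<dots> \<le> 0"
        proof -
          have "(real_of_int n)\<^sup>2 * 1 \<le> (real_of_int n)\<^sup>2 * real_of_int k"
            using False by (intro mult_left_mono) auto
          then show ?thesis using nD by simp
        qed
        finally have q: "(cmod (B + B'))\<^sup>2 - (A + A') * (C + C') \<le> 0" .
        have "ev (A + A') (B + B') (C + C') z0 t0 = 0" unfolding ev_add e0 e0' by simp
        then have "A + A' = 0 \<and> B + B' = 0 \<and> C + C' = 0" using zero_lemma[OF t0 _ q] by blast
        then show ?thesis by (auto simp: algebra_simps eq_neg_iff_add_eq_0)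
      qed
      then show ?thesis using ev_neg[of A B C z t] by auto
    qed
    show "mob_ext g ` HP A B C = HP A B C \<or> mob_ext g ` HP A B C \<inter> HP A B C = {}"
    proof (cases "\<exists>p \<in> HP A B C. mob_ext g p \<in> HP A B C")
      case False
      then show ?thesis by blast
    next
      case True
      have "mob_ext g ` HP A B C = HP A B C"
      proof
        show "mob_ext g ` HP A B C \<subseteq> HP A B C"
        proof
          fix q assume "q \<in> mob_ext g ` HP A B C"
          then obtain z t where p: "(z,t) \<in> HP A B C" and q: "q = mob_ext g (z,t)" by auto
          have t: "t > 0" and "ev A B C z t = 0" using p unfolding HP_def by auto
          then have "ev A' B' C' z t = 0" using same[OF True] by simp
          then show "q \<in> HP A B C" using pb[OF t] q by simp
        qed
      next
        show "HP A B C \<subseteq> mob_ext g ` HP A B C"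
        proof
          fix q assume qH: "q \<in> HP A B C"
          obtain z t where q: "q = (z,t)" by (cases q) auto
          have t: "t > 0" using qH q unfolding HP_def by auto
          have det': "de*al - (-be)*(-ga) = 1" using det by (simp add: algebra_simps)
          obtain z1 t1 where p: "mob_ext (de,-be,-ga,al) (z,t) = (z1,t1)" by (cases "mob_ext (de,-be,-ga,al) (z,t)") auto
          have t1: "t1 > 0" using pullback(1)[OF det' t, of z] p by simp
          have inv: "mob_ext g (z1,t1) = q" using mob_inv[OF det t, of z] p g q by simp
          have "ev A' B' C' z1 t1 = 0" using pb[OF t1, of z1] inv qH by simp
          then have "ev A B C z1 t1 = 0" using same[OF True] by simp
          then have "(z1,t1) \<in> HP A B C" using t1 unfolding HP_def by simp
          then show "q \<in> mob_ext g ` HP A B C" using inv by force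
        qed
      qed
      then show ?thesis by blast
    qed
  qed
qed


end
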